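(* There exists a perfectly nested $(k,\lambda)$-GDD of type $t^u$ only if all of the following hold: $k=2\lambda+1$; $\lambda t(u-1)\equiv 0 \pmod{k-1}$; $(\lambda+1)t(u-1)\equiv 0\pmod{k}$; $(\lambda+1)t^2u(u-1)\equiv 0 \pmod{(k+1)k}$; $t(u-1)\equiv 0\pmod{2k}$; and $u\ge k+1$.
   Context: A $(k,\lambda)$-group-divisible design (GDD) of type $t^u$ is a triple $(X,\mathcal{G},\mathcal{A})$ where $X$ is a set of $tu$ points, $\mathcal{G}$ is a partition of $X$ into $u$ groups of size $t$, and $\mathcal{A}$ is a multiset of $k$-subsets of $X$ (blocks) such that each block meets each group in at most one point and every pair of points from different groups lies in exactly $\lambda$ blocks. A partial $(k,\lambda)$-GDD of type $t^u$ is the same except that every pair of points from distinct groups lies in at most $\lambda$ blocks (and pairs from the same group lie in no block). A $(k,\lambda)$-GDD of type $t^u$ is nested if there is a map $\phi:\mathcal{A}\to X$ such that $(X,\mathcal{G},\{A\cup\{\phi(A)\}:A\in\mathcal{A}\})$ is a partial $(k+1,\lambda+1)$-GDD of type $t^u$; the nesting is perfect if this augmented structure is a $(k+1,\lambda+1)$-GDD of type $t^u$. *)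

theory Defs
  imports Main
begin

definition group_partition :: "nat \<Rightarrow> nat \<Rightarrow> 'a set \<Rightarrow> 'a set set \<Rightarrow> bool" where
  "group_partition t u X G \<longleftrightarrow>
     finite X \<and> card X = t * u \<and> finite G \<and> card G = u \<and> \<Union>G = X \<and>
     (\<forall>g\<in>G. g \<subseteq> X \<and> card g = t) \<and>
     (\<forall>g\<in>G. \<forall>h\<in>G. g \<noteq> h \<longrightarrow> g \<inter> h = {})"

definition diff_groups :: "'a set set \<Rightarrow> 'a \<Rightarrow> 'a \<Rightarrow> bool" where
  "diff_groups G x y \<longleftrightarrow> (\<forall>g\<in>G. \<not> (x \<in> g \<and> y \<in> g))"

text \<open>Blocks form a multiset, represented as a finite indexed family B over index set I
  (repeated blocks = distinct indices with equal sets).  Number of blocks containing x and y:\<close>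
definition pair_count :: "'i set \<Rightarrow> ('i \<Rightarrow> 'a set) \<Rightarrow> 'a \<Rightarrow> 'a \<Rightarrow> nat" where
  "pair_count I B x y = card {i\<in>I. x \<in> B i \<and> y \<in> B i}"

definition block_conditions :: "nat \<Rightarrow> 'a set \<Rightarrow> 'a set set \<Rightarrow> 'i set \<Rightarrow> ('i \<Rightarrow> 'a set) \<Rightarrow> bool" where
  "block_conditions k X G I B \<longleftrightarrow> finite I \<and>
     (\<forall>i\<in>I. B i \<subseteq> X \<and> card (B i) = k \<and> (\<forall>g\<in>G. card (B i \<inter> g) \<le> 1))"

definition is_gdd :: "nat \<Rightarrow> nat \<Rightarrow> nat \<Rightarrow> nat \<Rightarrow> 'a set \<Rightarrow> 'a set set \<Rightarrow> 'i set \<Rightarrow> ('i \<Rightarrow> 'a set) \<Rightarrow> bool" where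
  "is_gdd k lam t u X G I B \<longleftrightarrow> group_partition t u X G \<and> block_conditions k X G I B \<and>
     (\<forall>x\<in>X. \<forall>y\<in>X. diff_groups G x y \<longrightarrow> pair_count I B x y = lam)"

definition is_perfect_nesting :: "nat \<Rightarrow> nat \<Rightarrow> nat \<Rightarrow> nat \<Rightarrow> 'a set \<Rightarrow> 'a set set \<Rightarrow> 'i set \<Rightarrow> ('i \<Rightarrow> 'a set) \<Rightarrow> ('i \<Rightarrow> 'a) \<Rightarrow> bool" where
  "is_perfect_nesting k lam t u X G I B \<phi> \<longleftrightarrow> (\<forall>i\<in>I. \<phi> i \<in> X) \<and>
     is_gdd (Suc k) (Suc lam) t u X G I (\<lambda>i. insert (\<phi> i) (B i))"

definition perfectly_nested_gdd :: "nat \<Rightarrow> nat \<Rightarrow> nat \<Rightarrow> nat \<Rightarrow> 'a set \<Rightarrow> 'a set set \<Rightarrow> 'i set \<Rightarrow> ('i \<Rightarrow> 'a set) \<Rightarrow> bool" where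
  "perfectly_nested_gdd k lam t u X G I B \<longleftrightarrow> is_gdd k lam t u X G I B \<and>
     (\<exists>\<phi>. is_perfect_nesting k lam t u X G I B \<phi>)"

end

theory Submission
  imports Defs
begin

lemma card_filter_sum:
  assumes "finite A"
  shows "card {a\<in>A. P a} = (\<Sum>a\<in>A. if P a then 1 else 0)"
proof -
  have "card {a\<in>A. P a} = (\<Sum>a\<in>{a\<in>A. P a}. (1::nat))" by simp
  also have "\<dots> = (\<Sum>a\<in>A. if P a then 1 else 0)"
    using sum.inter_filter[OF assms, of "\<lambda>_. 1::nat" P] by simp
  finally show ?thesis .
qed

lemma double_count:
  assumes "finite A" "finite C"
  shows "(\<Sum>a\<in>A. card {c\<in>C. R a c}) = (\<Sum>c\<in>C. card {a\<in>A. R a c})"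
  using assms by (simp add: card_filter_sum sum.swap[of _ A C])

lemma rep:
  assumes g: "is_gdd k lam t u X G I B" and x: "x \<in> X"
  shows "card {i\<in>I. x \<in> B i} * (k - 1) = lam * (t*u - t)"
proof -
  have gp: "group_partition t u X G" and bc: "block_conditions k X G I B"
    and pc: "\<forall>x\<in>X. \<forall>y\<in>X. diff_groups G x y \<longrightarrow> pair_count I B x y = lam"
    using g unfolding is_gdd_def by auto
  have finX: "finite X" and cX: "card X = t*u" and UG: "\<Union>G = X"
    and gs: "\<forall>g\<in>G. g \<subseteq> X \<and> card g = t"
    and dis: "\<forall>g\<in>G. \<forall>h\<in>G. g \<noteq> h \<longrightarrow> g \<inter> h = {}"
    using gp unfolding group_partition_def by auto
  have finI: "finite I" and bI: "\<forall>i\<in>I. B i \<subseteq> X \<and> card (B i) = k \<and> (\<forall>g\<in>G. card (B i \<inter> g) \<le> 1)"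
    using bc unfolding block_conditions_def by auto
  obtain gx where gx: "gx \<in> G" "x \<in> gx" using x UG by blast
  define Y where "Y = {y\<in>X. diff_groups G x y}"
  have Y: "Y = X - gx"
  proof
    show "Y \<subseteq> X - gx" using gx unfolding Y_def diff_groups_def by auto
    show "X - gx \<subseteq> Y"
    proof
      fix y assume y: "y \<in> X - gx"
      have "diff_groups G x y"
        unfolding diff_groups_def
      proof (intro ballI notI)
        fix g assume "g \<in> G" "x \<in> g \<and> y \<in> g"
        then have "g = gx" using dis gx by blast
        then show False using y \<open>x \<in> g \<and> y \<in> g\<close> by auto
      qed
      then show "y \<in> Y" using y unfolding Y_def by auto
    qed
  qed
  have cY: "card Y = t*u - t"
  proof -
    have "gx \<subseteq> X" "card gx = t" using gs gx by auto
    moreover have "finite gx" using calculation finX finite_subset by blast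
    ultimately show ?thesis using Y cX by (simp add: card_Diff_subset)
  qed
  have finY: "finite Y" using Y finX by simp
  define Ix where "Ix = {i\<in>I. x \<in> B i}"
  have finIx: "finite Ix" using finI Ix_def by simp
  have eq1: "\<And>i. i \<in> Ix \<Longrightarrow> {y\<in>Y. y \<in> B i} = B i - {x}"
  proof -
    fix i assume i: "i \<in> Ix"
    then have iI: "i \<in> I" and xi: "x \<in> B i" unfolding Ix_def by auto
    have sub: "B i \<subseteq> X" and c1: "\<forall>g\<in>G. card (B i \<inter> g) \<le> 1" using bI iI by auto
    show "{y\<in>Y. y \<in> B i} = B i - {x}"
    proof
      show "{y\<in>Y. y \<in> B i} \<subseteq> B i - {x}" using Y gx by auto
      show "B i - {x} \<subseteq> {y\<in>Y. y \<in> B i}"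
      proof
        fix y assume y: "y \<in> B i - {x}"
        have "diff_groups G x y"
          unfolding diff_groups_def
        proof (intro ballI notI)
          fix g assume gG: "g \<in> G" and xy: "x \<in> g \<and> y \<in> g"
          have "finite g" using gG gs finX finite_subset by blast
          then have "card {x, y} \<le> card (B i \<inter> g)"
            using xy xi y by (intro card_mono) auto
          then show False using c1 gG y by auto
        qed
        then show "y \<in> {y\<in>Y. y \<in> B i}" using y sub unfolding Y_def by auto
      qed
    qed
  qed
  have "card Ix * (k - 1) = (\<Sum>i\<in>Ix. card {y\<in>Y. y \<in> B i})"
  proof -
    have "\<And>i. i \<in> Ix \<Longrightarrow> card {y\<in>Y. y \<in> B i} = k - 1"
    proof -
      fix i assume i: "i \<in> Ix"
      then have "card (B i) = k" "x \<in> B i" "finite (B i)"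
        using bI finX unfolding Ix_def by (auto intro: finite_subset)
      then show "card {y\<in>Y. y \<in> B i} = k - 1" using eq1[OF i] by simp
    qed
    then show ?thesis by simp
  qed
  also have "\<dots> = (\<Sum>y\<in>Y. card {i\<in>Ix. y \<in> B i})"
    by (rule double_count[OF finIx finY])
  also have "\<dots> = (\<Sum>y\<in>Y. lam)"
  proof (rule sum.cong)
    fix y assume y: "y \<in> Y"
    have "{i\<in>Ix. y \<in> B i} = {i\<in>I. x \<in> B i \<and> y \<in> B i}" unfolding Ix_def by auto
    then show "card {i\<in>Ix. y \<in> B i} = lam"
      using pc x y unfolding Y_def pair_count_def by auto
  qed simp
  finally show ?thesis using cY unfolding Ix_def by (simp add: mult.commute)
qed

lemma blocks:
  assumes g: "is_gdd k lam t u X G I B"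
  shows "card I * k * (k - 1) = t*u * (lam * (t*u - t))"
proof -
  have finX: "finite X" and cX: "card X = t*u"
    using g unfolding is_gdd_def group_partition_def by auto
  have finI: "finite I" and bI: "\<forall>i\<in>I. B i \<subseteq> X \<and> card (B i) = k"
    using g unfolding is_gdd_def block_conditions_def by auto
  have "card I * k = (\<Sum>i\<in>I. card {x\<in>X. x \<in> B i})"
  proof -
    have "\<And>i. i \<in> I \<Longrightarrow> card {x\<in>X. x \<in> B i} = k"
    proof -
      fix i assume "i \<in> I"
      then have "{x\<in>X. x \<in> B i} = B i" "card (B i) = k" using bI by auto
      then show "card {x\<in>X. x \<in> B i} = k" by simp
    qed
    then show ?thesis by simp
  qed
  also have "\<dots> = (\<Sum>x\<in>X. card {i\<in>I. x \<in> B i})"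
    by (rule double_count[OF finI finX])
  finally have "card I * k * (k - 1) = (\<Sum>x\<in>X. card {i\<in>I. x \<in> B i} * (k - 1))"
    by (simp add: sum_distrib_right)
  also have "\<dots> = (\<Sum>x\<in>X. lam * (t*u - t))"
    using rep[OF g] by simp
  finally show ?thesis using cX by simp
qed

lemma block_le:
  assumes g: "is_gdd k lam t u X G I B" and i: "i \<in> I"
  shows "k \<le> u"
proof -
  have finX: "finite X" and UG: "\<Union>G = X" and cG: "card G = u" and finG: "finite G"
    and gs: "\<forall>g\<in>G. g \<subseteq> X \<and> card g = t"
    using g unfolding is_gdd_def group_partition_def by auto
  have sub: "B i \<subseteq> X" and ck: "card (B i) = k" and c1: "\<forall>g\<in>G. card (B i \<inter> g) \<le> 1"
    using g i unfolding is_gdd_def block_conditions_def by auto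
  define f where "f = (\<lambda>a. SOME g. g \<in> G \<and> a \<in> g)"
  have f: "\<And>a. a \<in> B i \<Longrightarrow> f a \<in> G \<and> a \<in> f a"
  proof -
    fix a assume "a \<in> B i"
    then have "\<exists>g. g \<in> G \<and> a \<in> g" using sub UG by blast
    then show "f a \<in> G \<and> a \<in> f a" unfolding f_def by (rule someI_ex)
  qed
  have "inj_on f (B i)"
  proof (rule inj_onI)
    fix a b assume a: "a \<in> B i" and b: "b \<in> B i" and e: "f a = f b"
    show "a = b"
    proof (rule ccontr)
      assume ne: "a \<noteq> b"
      have "finite (f a)" using f[OF a] gs finX finite_subset by blast
      then have "card {a, b} \<le> card (B i \<inter> f a)"
        using f[OF a] f[OF b] e a b by (intro card_mono) auto
      then show False using c1 f[OF a] ne by auto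
    qed
  qed
  then have "card (B i) \<le> card G"
    using f finG by (intro card_inj_on_le) auto
  then show ?thesis using ck cG by simp
qed

theorem mainTheorem6:
  fixes k lam t u :: nat and X :: "'a set" and G :: "'a set set"
    and I :: "'i set" and B :: "'i \<Rightarrow> 'a set"
  assumes "lam \<ge> 1" and "t \<ge> 1" and "u \<ge> 2"
    and "perfectly_nested_gdd k lam t u X G I B"
  shows "k = 2 * lam + 1 \<and>
         (lam * t * (u - 1)) mod (k - 1) = 0 \<and>
         ((lam + 1) * t * (u - 1)) mod k = 0 \<and>
         ((lam + 1) * t^2 * u * (u - 1)) mod ((k + 1) * k) = 0 \<and>
         (t * (u - 1)) mod (2 * k) = 0 \<and>
         u \<ge> k + 1"
proof -
  have g: "is_gdd k lam t u X G I B" using assms(4) unfolding perfectly_nested_gdd_def by auto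
  obtain \<phi> where "is_perfect_nesting k lam t u X G I B \<phi>"
    using assms(4) unfolding perfectly_nested_gdd_def by auto
  then have g2: "is_gdd (Suc k) (Suc lam) t u X G I (\<lambda>i. insert (\<phi> i) (B i))"
    unfolding is_perfect_nesting_def by auto
  have cX: "card X = t*u" using g unfolding is_gdd_def group_partition_def by auto
  have tu: "t*u - t = t*(u-1)" by (simp add: diff_mult_distrib2)
  have pos: "t*(u-1) > 0" using assms by simp
  have "card X > 0" using cX assms by simp
  then obtain x where x: "x \<in> X" by fastforce
  define r where "r = card {i\<in>I. x \<in> B i}"
  define r' where "r' = card {i\<in>I. x \<in> insert (\<phi> i) (B i)}"
  define b where "b = card I"
  have R: "r * (k - 1) = lam * (t*(u-1))" using rep[OF g x] tu unfolding r_def by simp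
  have R': "r' * k = (lam+1) * (t*(u-1))" using rep[OF g2 x] tu unfolding r'_def by simp
  have Bk: "b * k * (k - 1) = t*u * (lam * (t*(u-1)))" using blocks[OF g] tu unfolding b_def by simp
  have Bk': "b * (k+1) * k = t*u * ((lam+1) * (t*(u-1)))" using blocks[OF g2] tu unfolding b_def by simp
  define T where "T = t*u*(t*(u-1))"
  have Tpos: "T > 0" using pos assms unfolding T_def by simp
  have E1: "b * k * (k - 1) = lam * T" using Bk unfolding T_def by (simp add: algebra_simps)
  have E2: "b * k * (k + 1) = (lam+1) * T" using Bk' unfolding T_def by (simp add: algebra_simps)
  have bk: "b * k > 0"
  proof (rule ccontr)
    assume "\<not> b * k > 0"
    then have "b * k = 0" by simp
    then have "lam * T = 0" using E1 by (metis mult_0)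
    then show False using Tpos assms(1) by simp
  qed
  have e1: "b * k * (k - 1) * (lam + 1) = lam * T * (lam + 1)" using E1 by simp
  have e2: "b * k * (k + 1) * lam = (lam + 1) * T * lam" using E2 by simp
  have "b * k * ((k - 1) * (lam + 1)) = b * k * ((k + 1) * lam)"
    using e1 e2 by (simp only: mult_ac)
  then have "(k - 1) * (lam + 1) = (k + 1) * lam" using bk by simp
  moreover have "k \<ge> 1" using R' assms pos by (cases k) auto
  ultimately have K: "k = 2 * lam + 1"
    by (cases k) (auto simp: algebra_simps)
  have c2: "(lam * t * (u - 1)) mod (k - 1) = 0"
  proof -
    have "lam * t * (u - 1) = r * (k - 1)" using R by (simp add: mult.assoc)
    then show ?thesis by simp
  qed
  have c3: "((lam + 1) * t * (u - 1)) mod k = 0"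
  proof -
    have "(lam + 1) * t * (u - 1) = r' * k" using R' by (simp only: mult.assoc)
    then show ?thesis by simp
  qed
  have c4: "((lam + 1) * t^2 * u * (u - 1)) mod ((k + 1) * k) = 0"
  proof -
    have "(lam + 1) * t^2 * u * (u - 1) = b * ((k+1) * k)"
      using Bk' by (simp add: power2_eq_square algebra_simps)
    then show ?thesis by simp
  qed
  define m where "m = t * (u - 1)"
  have m2: "m = 2 * r" using R K assms(1) unfolding m_def by simp
  have "k dvd (lam+1) * m" using R' unfolding m_def by (metis dvd_triv_right mult.commute)
  then have "k dvd 2 * ((lam+1) * m)" by (rule dvd_mult)
  moreover have "2 * ((lam+1) * m) = k * m + m" using K by (simp add: algebra_simps)
  ultimately have "k dvd k * m + m" by metis
  then have "k dvd m" using dvd_add_right_iff[of k "k*m" m] by simp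
  then obtain q where q: "m = k * q" by blast
  have "even (k * q)" using q m2 by (metis dvd_triv_left)
  then have "even q" using K by simp
  then obtain q' where "q = 2 * q'" by blast
  then have c5: "(t * (u - 1)) mod (2 * k) = 0" using q unfolding m_def by simp
  have "I \<noteq> {}"
  proof
    assume "I = {}"
    then have "r = 0" unfolding r_def by simp
    then show False using R assms pos by simp
  qed
  then obtain i where "i \<in> I" by blast
  from block_le[OF g2 this] have c6: "u \<ge> k + 1" by simp
  show ?thesis using K c2 c3 c4 c5 c6 by auto
qed

end
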